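(* Run the mechanism BFM-VM described in the context with $\ell=2$ and arbitrary $B>0$, $\alpha>1$, with all sellers behaving truthfully, and let $O$ be an optimal solution of $\max\{v(S): S\subseteq\mathcal{N},\ c(S)\le B\}$. Then $$v(O)\ \le\ 2\rho_M+2\sum_{i=1}^{2}\sum_{t=1}^{M}v(S_{i,t}).$$
   Context: Setting. $\mathcal{N}$ is a finite set of $n$ sellers. The valuation $v:2^{\mathcal{N}}\to\mathbb{R}_{\ge 0}$ satisfies $v(\emptyset)=0$ and is submodular (for $X\subseteq Y\subseteq\mathcal{N}$ and $u\notin Y$, $v(u\mid Y)\le v(u\mid X)$), not necessarily monotone, where $v(S\mid T)=v(S\cup T)-v(T)$, $v(u\mid T)=v(\{u\}\mid T)$, $v(u)=v(\{u\})$. Each seller $u$ has a private cost $c(u)\ge 0$; $c(X)=\sum_{u\in X}c(u)$. $B>0$ is the budget, $[\ell]=\{1,\dots,\ell\}$. Sellers behave truthfully: a seller $u$ offered price $q$ accepts iff $c(u)\le q$. Mechanism BFM-VM (inputs $B$, $\alpha>1$, $\ell\in\{1,2\}$): 1. Offer every seller the price $B$; let $R$ be the set of sellers who accept, and set $p(u)=B$ for $u\in R$. 2. Set $t=1$, $\rho_1=\max_{u\in R}v(u)$, $S_{1,1}=\{u_0\}$ for some $u_0\in\arg\max_{u\in R}v(u)$, and (if $\ell=2$) $S_{2,1}=\emptyset$. 3. Repeat rounds: set $t\leftarrow t+1$, $\rho_t=\alpha\rho_{t-1}$, $S_{i,t}=\emptyset$ for $i\in[\ell]$. Process the sellers $u\in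 R\setminus\bigcup_{i=1}^{\ell}S_{i,t-1}$ one at a time in a fixed order. For each such $u$: pick $j\in\arg\max_{i\in[\ell]}v(u\mid S_{i,t})$ (current contents); update $p(u)\leftarrow\min\{p(u),\ v(u\mid S_{j,t})/(\rho_t/B)\}$ and offer $p(u)$ to $u$. If $u$ accepts: if $v(S_{j,t}\cup\{u\})>\rho_t$, end the round immediately; otherwise add $u$ to $S_{j,t}$. If $u$ rejects, remove $u$ from $R$. After the round, stop if $R\setminus\bigcup_{i=1}^{\ell}(S_{i,t-1}\cup S_{i,t})=\emptyset$; otherwise start another round. 4. Let $M$ be the final value of $t$. Output $S^*\in\arg\max_{A\in\{S_{i,t}: i\in[\ell],\ t\in\{M-1,M\}\}}v(A)$, paying each $u\in S^*$ its current price $p(u)$. Notation: $S_{i,t}$ denotes the contents of that candidate set at the end of round $t$; $\rho_M$ is the threshold of the last round. *)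

theory Defs
  imports Main "HOL-Library.FuncSet" Complex_Main
begin

definition marg :: "('a set \<Rightarrow> real) \<Rightarrow> 'a \<Rightarrow> 'a set \<Rightarrow> real" where
  "marg v u T = v (T \<union> {u}) - v T"

definition submodular_on :: "'a set \<Rightarrow> ('a set \<Rightarrow> real) \<Rightarrow> bool" where
  "submodular_on N v \<longleftrightarrow>
     (\<forall>X Y u. X \<subseteq> Y \<longrightarrow> Y \<subseteq> N \<longrightarrow> u \<in> N \<longrightarrow> u \<notin> Y \<longrightarrow> marg v u Y \<le> marg v u X)"

text \<open>State inside a round: current set R, current prices p, and the candidate sets
  (indexed by i \<in> {1,2}) of the current round.\<close>
type_synonym 'a bfm_state = "'a set \<times> ('a \<Rightarrow> real) \<times> (nat \<Rightarrow> 'a set)"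

text \<open>Processing of one round of BFM-VM (with \<ell> = 2) with threshold \<rho>:
  \<open>bfm_round v c B \<rho> queue st st'\<close> means that processing the sellers of \<open>queue\<close>
  in order, starting in state st, can end in state st' (nondeterminism only in
  the tie-breaking choice of j). Sellers are truthful: accept iff c u \<le> price.\<close>
inductive bfm_round :: "('a set \<Rightarrow> real) \<Rightarrow> ('a \<Rightarrow> real) \<Rightarrow> real \<Rightarrow> real
    \<Rightarrow> 'a list \<Rightarrow> 'a bfm_state \<Rightarrow> 'a bfm_state \<Rightarrow> bool"
  for v c B \<rho> where
  finish: "bfm_round v c B \<rho> [] st st"
| reject: "\<lbrakk> j \<in> {1,2}; \<forall>i\<in>{1,2}. marg v u (S i) \<le> marg v u (S j);
            q = min (p u) (marg v u (S j) / (\<rho> / B));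
            \<not> c u \<le> q;
            bfm_round v c B \<rho> us (R - {u}, p(u := q), S) st' \<rbrakk>
          \<Longrightarrow> bfm_round v c B \<rho> (u # us) (R, p, S) st'"
| add: "\<lbrakk> j \<in> {1,2}; \<forall>i\<in>{1,2}. marg v u (S i) \<le> marg v u (S j);
          q = min (p u) (marg v u (S j) / (\<rho> / B));
          c u \<le> q; \<not> v (S j \<union> {u}) > \<rho>;
          bfm_round v c B \<rho> us (R, p(u := q), S(j := S j \<union> {u})) st' \<rbrakk>
        \<Longrightarrow> bfm_round v c B \<rho> (u # us) (R, p, S) st'"
| stop: "\<lbrakk> j \<in> {1,2}; \<forall>i\<in>{1,2}. marg v u (S i) \<le> marg v u (S j);
           q = min (p u) (marg v u (S j) / (\<rho> / B));
           c u \<le> q; v (S j \<union> {u}) > \<rho> \<rbrakk>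
         \<Longrightarrow> bfm_round v c B \<rho> (u # us) (R, p, S) (R, p(u := q), S)"

text \<open>A complete execution of BFM-VM with \<ell> = 2. The sellers are N, processed in the
  fixed order given by the list ord. The trace records, for every round t \<in> {1..M}:
  the threshold \<rho> t, the candidate sets S i t (i \<in> {1,2}, contents at the end of round t),
  the set R after round t (Rs t) and the prices after round t (ps t).\<close>
definition bfm_vm_run ::
  "'a set \<Rightarrow> 'a list \<Rightarrow> ('a set \<Rightarrow> real) \<Rightarrow> ('a \<Rightarrow> real) \<Rightarrow> real \<Rightarrow> real
   \<Rightarrow> nat \<Rightarrow> (nat \<Rightarrow> real) \<Rightarrow> (nat \<Rightarrow> nat \<Rightarrow> 'a set) \<Rightarrow> (nat \<Rightarrow> 'a set) \<Rightarrow> (nat \<Rightarrow> 'a \<Rightarrow> real) \<Rightarrow> bool"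
  where
  "bfm_vm_run N ord v c B \<alpha> M \<rho> S Rs ps \<longleftrightarrow>
     \<comment> \<open>Step 1: every seller is offered B; R = accepting sellers, p(u) = B\<close>
     Rs 1 = {u \<in> N. c u \<le> B} \<and> ps 1 = (\<lambda>u. B) \<and>
     \<comment> \<open>Step 2\<close>
     (\<exists>u0 \<in> Rs 1. (\<forall>u \<in> Rs 1. v {u} \<le> v {u0}) \<and>
        \<rho> 1 = v {u0} \<and> S 1 1 = {u0} \<and> S 2 1 = {}) \<and>
     (\<forall>i. i \<notin> {1,2} \<longrightarrow> S i 1 = {}) \<and>
     \<comment> \<open>Step 3: rounds t = 2..M\<close>
     2 \<le> M \<and>
     (\<forall>t \<in> {2..M}.
        \<rho> t = \<alpha> * \<rho> (t - 1) \<and>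
        bfm_round v c B (\<rho> t)
          (filter (\<lambda>u. u \<in> Rs (t - 1) \<and> u \<notin> S 1 (t - 1) \<union> S 2 (t - 1)) ord)
          (Rs (t - 1), ps (t - 1), (\<lambda>i. {}))
          (Rs t, ps t, (\<lambda>i. S i t))) \<and>
     \<comment> \<open>stopping rule: continue after rounds 2..M-1, stop after round M\<close>
     (\<forall>t \<in> {2..<M}. Rs t - (\<Union>i\<in>{1,2}. S i (t - 1) \<union> S i t) \<noteq> {}) \<and>
     Rs M - (\<Union>i\<in>{1,2}. S i (M - 1) \<union> S i M) = {}"

end

theory Submission
  imports Defs
begin

lemma round_S:
  "bfm_round v c B \<rho> us st st' \<Longrightarrow>
   (\<forall>i. snd (snd st) i \<subseteq> snd (snd st') i \<and> snd (snd st') i \<subseteq> snd (snd st) i \<union> set us)"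
proof (induction rule: bfm_round.induct)
  case (add j u S q p us R st')
  then show ?case by (auto split: if_splits)
qed auto

lemma round_R:
  "bfm_round v c B \<rho> us st st' \<Longrightarrow> fst st' \<subseteq> fst st \<and> fst st - fst st' \<subseteq> set us"
  by (induction rule: bfm_round.induct) auto

lemma round_p:
  "bfm_round v c B \<rho> us st st' \<Longrightarrow> (\<forall>u\<in>fst st. c u \<le> fst (snd st) u)
   \<Longrightarrow> (\<forall>u\<in>fst st'. c u \<le> fst (snd st') u)"
  by (induction rule: bfm_round.induct) auto

lemma round_disj:
  "bfm_round v c B \<rho> us st st' \<Longrightarrow> distinct us \<Longrightarrow>
   set us \<inter> (snd (snd st) 1 \<union> snd (snd st) 2) = {} \<Longrightarrow>
   snd (snd st) 1 \<inter> snd (snd st) 2 = {} \<Longrightarrow>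
   snd (snd st') 1 \<inter> snd (snd st') 2 = {}"
proof (induction rule: bfm_round.induct)
  case (add j u S q p us R st')
  show ?case
    apply (rule add.IH)
    using add.prems add.hyps(1) by auto
qed auto

lemma marg_le:
  "submodular_on N v \<Longrightarrow> X \<subseteq> Y \<Longrightarrow> Y \<subseteq> N \<Longrightarrow> u \<in> N \<Longrightarrow> u \<notin> Y \<Longrightarrow> marg v u Y \<le> marg v u X"
  unfolding submodular_on_def by blast

lemma round_rej:
  "bfm_round v c B \<rho> us st st' \<Longrightarrow> distinct us \<Longrightarrow> set us \<subseteq> fst st \<Longrightarrow> fst st \<subseteq> N \<Longrightarrow>
   set us \<inter> (snd (snd st) 1 \<union> snd (snd st) 2) = {} \<Longrightarrow>
   snd (snd st) 1 \<inter> snd (snd st) 2 = {} \<Longrightarrow> snd (snd st) 1 \<subseteq> N \<Longrightarrow> snd (snd st) 2 \<subseteq> N \<Longrightarrow>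
   \<rho> > 0 \<Longrightarrow> B > 0 \<Longrightarrow> submodular_on N v \<Longrightarrow> (\<forall>u\<in>fst st. c u \<le> fst (snd st) u) \<Longrightarrow>
   (\<forall>w\<in>fst st - fst st'. w \<notin> snd (snd st') 1 \<union> snd (snd st') 2 \<and>
      (\<forall>i\<in>{1,2}. marg v w (snd (snd st') i) < c w * \<rho> / B))"
proof (induction rule: bfm_round.induct)
  case (finish st)
  then show ?case by auto
next
  case (reject j u S q p us R st')
  have IH: "\<forall>w\<in>fst (R - {u}, p(u := q), S) - fst st'. w \<notin> snd (snd st') 1 \<union> snd (snd st') 2 \<and>
      (\<forall>i\<in>{1,2}. marg v w (snd (snd st') i) < c w * \<rho> / B)"
    apply (rule reject.IH) using reject.prems by auto
  then have IH: "\<forall>w\<in>(R - {u}) - fst st'. w \<notin> snd (snd st') 1 \<union> snd (snd st') 2 \<and> (\<forall>i\<in>{1,2}. marg v w (snd (snd st') i) < c w * \<rho> / B)" by simp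
  let ?S' = "snd (snd st')"
  have sS: "\<forall>i. S i \<subseteq> ?S' i \<and> ?S' i \<subseteq> S i \<union> set us"
    using round_S[OF reject.hyps(5)] by simp
  have uN: "u \<in> N" "u \<in> R" using reject.prems by auto
  have unot: "u \<notin> ?S' 1 \<union> ?S' 2" using sS reject.prems(1,4) by auto
  have cu: "c u \<le> p u" using reject.prems uN by auto
  have qeq: "q = marg v u (S j) / (\<rho> / B)" using reject.hyps(3) cu reject.hyps(4) by auto
  have "marg v u (S j) / (\<rho> / B) < c u" using qeq reject.hyps(4) by auto
  then have mj: "marg v u (S j) < c u * \<rho> / B" using reject.prems(8,9)
    by (simp add: field_simps)
  have "\<forall>i\<in>{1,2}. marg v u (?S' i) < c u * \<rho> / B"
  proof
    fix i :: nat assume i: "i \<in> {1,2}"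
    have "S i \<subseteq> N" using i reject.prems(6,7) by auto
    moreover have "set us \<subseteq> N" using reject.prems(2,3) by auto
    ultimately have "?S' i \<subseteq> N" using sS by blast
    then have "marg v u (?S' i) \<le> marg v u (S i)"
      using marg_le[OF reject.prems(10)] sS uN unot i by auto
    also have "\<dots> \<le> marg v u (S j)" using reject.hyps(2) i by auto
    finally show "marg v u (?S' i) < c u * \<rho> / B" using mj by linarith
  qed
  then show ?case using IH unot by auto
next
  case (add j u S q p us R st')
  have IH: "\<forall>w\<in>fst (R, p(u := q), S(j := S j \<union> {u})) - fst st'. w \<notin> snd (snd st') 1 \<union> snd (snd st') 2 \<and>
      (\<forall>i\<in>{1,2}. marg v w (snd (snd st') i) < c w * \<rho> / B)"
    apply (rule add.IH) using add.prems add.hyps(1,4) by (auto simp: min_def split: if_splits)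
  then show ?case by simp
next
  case (stop j u S q p us R)
  then show ?case by simp
qed

lemma round_tele:
  "bfm_round v c B \<rho> us st st' \<Longrightarrow> distinct us \<Longrightarrow> set us \<subseteq> fst st \<Longrightarrow> fst st \<subseteq> N \<Longrightarrow>
   set us \<inter> (snd (snd st) 1 \<union> snd (snd st) 2) = {} \<Longrightarrow>
   snd (snd st) 1 \<inter> snd (snd st) 2 = {} \<Longrightarrow> snd (snd st) 1 \<subseteq> N \<Longrightarrow> snd (snd st) 2 \<subseteq> N \<Longrightarrow>
   \<rho> > 0 \<Longrightarrow> B > 0 \<Longrightarrow> submodular_on N v \<Longrightarrow> (\<forall>u\<in>N. c u \<ge> 0) \<Longrightarrow>
   (\<forall>k\<in>{1,2}. (\<Sum>u\<in>Xo \<inter> (snd (snd st') k - snd (snd st) k). marg v u (snd (snd st') (3 - k)))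
        \<le> v (snd (snd st') k) - v (snd (snd st) k))"
proof (induction rule: bfm_round.induct)
  case (finish st)
  then show ?case by auto
next
  case (reject j u S q p us R st')
  have "\<forall>k\<in>{1,2}. (\<Sum>u\<in>Xo \<inter> (snd (snd st') k - snd (snd (R - {u}, p(u := q), S)) k). marg v u (snd (snd st') (3 - k)))
        \<le> v (snd (snd st') k) - v (snd (snd (R - {u}, p(u := q), S)) k)"
    apply (rule reject.IH) using reject.prems by auto
  then show ?case by simp
next
  case (add j u S q p us R st')
  let ?S0 = "S(j := S j \<union> {u})"
  let ?S' = "snd (snd st')"
  have "\<forall>k\<in>{1,2}. (\<Sum>u\<in>Xo \<inter> (?S' k - snd (snd (R, p(u := q), ?S0)) k). marg v u (?S' (3 - k)))
        \<le> v (?S' k) - v (snd (snd (R, p(u := q), ?S0)) k)"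
    apply (rule add.IH) using add.prems add.hyps(1) by auto
  then have IH: "\<forall>k\<in>{1,2}. (\<Sum>u\<in>Xo \<inter> (?S' k - ?S0 k). marg v u (?S' (3 - k)))
        \<le> v (?S' k) - v (?S0 k)" by (simp only: snd_conv)
  have sS: "\<forall>i. ?S0 i \<subseteq> ?S' i \<and> ?S' i \<subseteq> ?S0 i \<union> set us"
    using round_S[OF add.hyps(6)] by simp
  have dj: "?S' 1 \<inter> ?S' 2 = {}"
    using round_disj[OF bfm_round.add[OF add.hyps(1-6)]] add.prems by simp
  have uN: "u \<in> N" "u \<in> R" using add.prems by auto
  have "u \<notin> S 1 \<union> S 2" using add.prems(4) by auto
  then have unS: "u \<notin> S j" using add.hyps(1) by auto
  have usN: "set us \<subseteq> N" using add.prems by auto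
  have "0 \<le> c u" using add.prems(11) uN by auto
  then have "0 \<le> marg v u (S j) / (\<rho> / B)" using add.hyps(3,4) by linarith
  then have m0: "0 \<le> marg v u (S j)" using add.prems(8,9)
    by (simp add: zero_le_divide_iff zero_le_mult_iff)
  have "\<forall>k\<in>{1,2}. (\<Sum>u\<in>Xo \<inter> (?S' k - S k). marg v u (?S' (3 - k))) \<le> v (?S' k) - v (S k)"
  proof
    fix k :: nat assume k: "k \<in> {1,2}"
    show "(\<Sum>u\<in>Xo \<inter> (?S' k - S k). marg v u (?S' (3 - k))) \<le> v (?S' k) - v (S k)"
    proof (cases "k = j")
      case False
      then show ?thesis using IH k by auto
    next
      case True
      have "?S' k \<subseteq> ?S0 k \<union> set us" using sS by blast
      then have "Xo \<inter> (?S' k - ?S0 k) \<subseteq> set us" by blast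
      then have fin: "finite (Xo \<inter> (?S' k - ?S0 k))"
        by (rule finite_subset) simp
      have "?S0 j \<subseteq> ?S' j" using sS by blast
      then have uS': "u \<in> ?S' k" using True by auto
      have o: "3 - k \<in> {1,2}" "3 - k \<noteq> k" using k by auto
      have uo: "u \<notin> ?S' (3 - k)" using dj uS' k by auto
      have S3N: "S (3 - k) \<subseteq> N" using add.prems(6,7) o by auto
      have "?S' (3 - k) \<subseteq> ?S0 (3 - k) \<union> set us" using sS by blast
      moreover have eq0: "?S0 (3 - k) = S (3 - k)" using o True by simp
      ultimately have s3: "?S' (3 - k) \<subseteq> N" using S3N usN by blast
      have "S (3 - k) \<subseteq> ?S' (3 - k)" using sS eq0 by metis
      then have "marg v u (?S' (3 - k)) \<le> marg v u (S (3 - k))"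
        using marg_le[OF add.prems(10) _ s3 uN(1) uo] by blast
      also have "\<dots> \<le> marg v u (S j)" using add.hyps(2) o by auto
      finally have mu: "marg v u (?S' (3 - k)) \<le> marg v u (S j)" .
      have eqv: "v (?S0 k) - v (S k) = marg v u (S j)" using True by (simp add: marg_def)
      have IHk: "(\<Sum>u\<in>Xo \<inter> (?S' k - ?S0 k). marg v u (?S' (3 - k))) \<le> v (?S' k) - v (?S0 k)"
        using IH k by auto
      show ?thesis
      proof (cases "u \<in> Xo")
        case True2: True
        have "Xo \<inter> (?S' k - S k) = insert u (Xo \<inter> (?S' k - ?S0 k))"
          using True True2 uS' unS by auto
        moreover have "u \<notin> Xo \<inter> (?S' k - ?S0 k)" using True by auto
        ultimately have "(\<Sum>u\<in>Xo \<inter> (?S' k - S k). marg v u (?S' (3 - k))) =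
          marg v u (?S' (3 - k)) + (\<Sum>u\<in>Xo \<inter> (?S' k - ?S0 k). marg v u (?S' (3 - k)))"
          using fin by simp
        then show ?thesis using IHk mu eqv by linarith
      next
        case False2: False
        have "?S0 k = insert u (S k)" using True by simp
        then have "Xo \<inter> (?S' k - ?S0 k) = Xo \<inter> (?S' k - insert u (S k))" by simp
        also have "\<dots> = Xo \<inter> (?S' k - S k)" using False2 by blast
        finally have seq: "Xo \<inter> (?S' k - S k) = Xo \<inter> (?S' k - ?S0 k)" by (rule sym)
        have "(\<Sum>u\<in>Xo \<inter> (?S' k - S k). marg v u (?S' (3 - k))) = (\<Sum>u\<in>Xo \<inter> (?S' k - ?S0 k). marg v u (?S' (3 - k)))"
          by (simp only: seq)
        then show ?thesis using IHk m0 eqv by linarith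
      qed
    qed
  qed
  then show ?case by (simp only: snd_conv)
next
  case (stop j u S q p us R)
  then show ?case by simp
qed

lemma marg_le':
  "submodular_on N v \<Longrightarrow> X \<subseteq> Y \<Longrightarrow> Y \<subseteq> N \<Longrightarrow> u \<in> N \<Longrightarrow> u \<notin> Y \<Longrightarrow> marg v u Y \<le> marg v u X"
  unfolding submodular_on_def by blast

lemma sub_union_le:
  assumes sm: "submodular_on N v" and Y: "Y \<subseteq> N"
  shows "finite A \<Longrightarrow> A \<subseteq> N \<Longrightarrow> v (A \<union> Y) \<le> v Y + (\<Sum>u\<in>A - Y. marg v u Y)"
proof (induction A rule: finite_induct)
  case empty then show ?case by simp
next
  case (insert a A)
  show ?case
  proof (cases "a \<in> Y")
    case True
    then have "insert a A \<union> Y = A \<union> Y" "insert a A - Y = A - Y" by auto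
    with insert show ?thesis by simp
  next
    case False
    have "insert a A - Y = insert a (A - Y)" using False by auto
    moreover have "a \<notin> A - Y" using insert by auto
    moreover have "finite (A - Y)" using insert by auto
    ultimately have s: "(\<Sum>u\<in>insert a A - Y. marg v u Y) = marg v a Y + (\<Sum>u\<in>A - Y. marg v u Y)" by simp
    have e: "v (insert a A \<union> Y) = v (A \<union> Y) + marg v a (A \<union> Y)"
      by (simp add: marg_def insert_commute)
    have "marg v a (A \<union> Y) \<le> marg v a Y"
      by (rule marg_le'[OF sm]) (use insert Y False in auto)
    moreover have "v (A \<union> Y) \<le> v Y + (\<Sum>u\<in>A - Y. marg v u Y)" using insert.IH insert.prems by auto
    ultimately show ?thesis using s e by linarith
  qed
qed

lemma sub_diff_mono:
  assumes sm: "submodular_on N v" and ZY: "Z \<subseteq> Y" and Y: "Y \<subseteq> N"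
  shows "finite D \<Longrightarrow> D \<subseteq> N \<Longrightarrow> D \<inter> Y = {} \<Longrightarrow> v (Y \<union> D) - v Y \<le> v (Z \<union> D) - v Z"
proof (induction D rule: finite_induct)
  case empty then show ?case by simp
next
  case (insert d D)
  have e1: "v (Y \<union> insert d D) = v (Y \<union> D) + marg v d (Y \<union> D)"
    by (simp add: marg_def insert_commute)
  have e2: "v (Z \<union> insert d D) = v (Z \<union> D) + marg v d (Z \<union> D)"
    by (simp add: marg_def insert_commute)
  have "marg v d (Y \<union> D) \<le> marg v d (Z \<union> D)"
    by (rule marg_le'[OF sm]) (use insert Y ZY in auto)
  then show ?case using insert e1 e2 by auto
qed

lemma sub_lattice:
  assumes sm: "submodular_on N v" and fin: "finite N" and X: "X \<subseteq> N" and Y: "Y \<subseteq> N"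
  shows "v (X \<union> Y) + v (X \<inter> Y) \<le> v X + v Y"
proof -
  have "v (Y \<union> (X - Y)) - v Y \<le> v ((X \<inter> Y) \<union> (X - Y)) - v (X \<inter> Y)"
    by (rule sub_diff_mono[OF sm _ Y]) (use X fin finite_subset in auto)
  moreover have "Y \<union> (X - Y) = X \<union> Y" "(X \<inter> Y) \<union> (X - Y) = X" by auto
  ultimately show ?thesis by simp
qed

lemma two_set:
  assumes sm: "submodular_on N v" and fin: "finite N" and nn: "\<forall>X \<subseteq> N. v X \<ge> 0"
    and D: "D \<subseteq> N" and Y1: "Y1 \<subseteq> N" and Y2: "Y2 \<subseteq> N" and dj: "Y1 \<inter> Y2 = {}"
  shows "v D \<le> v (D \<union> Y1) + v (D \<union> Y2)"
proof -
  have "v ((D \<union> Y1) \<union> (D \<union> Y2)) + v ((D \<union> Y1) \<inter> (D \<union> Y2)) \<le> v (D \<union> Y1) + v (D \<union> Y2)"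
    by (rule sub_lattice[OF sm fin]) (use D Y1 Y2 in auto)
  moreover have "(D \<union> Y1) \<inter> (D \<union> Y2) = D" using dj by auto
  moreover have "v ((D \<union> Y1) \<union> (D \<union> Y2)) \<ge> 0" using nn D Y1 Y2 by auto
  ultimately show ?thesis by simp
qed

lemma subadd_UN:
  assumes sm: "submodular_on N v" and fin: "finite N" and nn: "\<forall>X \<subseteq> N. v X \<ge> 0"
    and v0: "v {} = 0"
  shows "finite I \<Longrightarrow> (\<forall>t\<in>I. D t \<subseteq> N) \<Longrightarrow> v (\<Union>t\<in>I. D t) \<le> (\<Sum>t\<in>I. v (D t))"
proof (induction I rule: finite_induct)
  case empty then show ?case using v0 by simp
next
  case (insert a I)
  have U: "(\<Union>t\<in>I. D t) \<subseteq> N" using insert by auto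
  have Da: "D a \<subseteq> N" using insert by auto
  have "v (D a \<union> (\<Union>t\<in>I. D t)) + v (D a \<inter> (\<Union>t\<in>I. D t)) \<le> v (D a) + v (\<Union>t\<in>I. D t)"
    by (rule sub_lattice[OF sm fin Da U])
  moreover have "D a \<inter> (\<Union>t\<in>I. D t) \<subseteq> N" using Da by auto
  then have "v (D a \<inter> (\<Union>t\<in>I. D t)) \<ge> 0" using nn by auto
  ultimately show ?case using insert by simp
qed

lemma exists_drop:
  fixes f :: "nat \<Rightarrow> 'a set"
  shows "1 \<le> M \<Longrightarrow> u \<in> f 1 \<Longrightarrow> u \<notin> f M \<Longrightarrow> \<exists>t\<in>{2..M}. u \<in> f (t - 1) \<and> u \<notin> f t"
proof (induction M)
  case 0 then show ?case by simp
next
  case (Suc m)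
  show ?case
  proof (cases "u \<in> f m")
    case True
    have "m \<noteq> 0" using Suc.prems by (cases m) auto
    then show ?thesis using Suc.prems True by (intro bexI[of _ "Suc m"]) auto
  next
    case False
    have "m \<noteq> 0" using Suc.prems by (cases m) auto
    moreover have "m \<noteq> 1"
    proof
      assume "m = 1" then show False using False Suc.prems by simp
    qed
    ultimately have "1 \<le> m" by simp
    then obtain t where "t \<in> {2..m}" "u \<in> f (t - 1) \<and> u \<notin> f t" using Suc.IH Suc.prems False by blast
    then show ?thesis by (intro bexI[of _ t]) auto
  qed
qed

lemma telescope:
  fixes f :: "nat \<Rightarrow> real"
  shows "1 \<le> M \<Longrightarrow> (\<Sum>t\<in>{1..M}. (if t = 1 then 0 else f (t - 1) - f t)) = f 1 - f M"
proof (induction M)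
  case 0 then show ?case by simp
next
  case (Suc m)
  show ?case
  proof (cases "m = 0")
    case True then show ?thesis by simp
  next
    case False
    then show ?thesis using Suc by (simp add: sum.atLeast_Suc_atMost_Suc_shift)
  qed
qed

lemma round_piece:
  assumes sm: "submodular_on N v" and fin: "finite N"
    and Yi: "Yi \<subseteq> N" and Yo: "Yo \<subseteq> N" and dj: "Yi \<inter> Yo = {}" and OptN: "Opt \<subseteq> N"
    and Rji: "Rj \<inter> Yi = {}" and Rjo: "Rj \<inter> Yo = {}" and RjO: "Rj \<subseteq> Opt"
    and tele: "(\<Sum>u\<in>Opt \<inter> Yo. marg v u Yi) \<le> v Yo"
    and mb: "\<forall>u\<in>Rj. marg v u Yi \<le> c u * r / B"
    and Bp: "B > 0" and rR: "r \<le> R" and cnn: "\<forall>u\<in>Rj. c u \<ge> 0"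
  shows "v ((Opt \<inter> (Yi \<union> Yo \<union> Rj)) \<union> Yi) \<le> v Yi + v Yo + R * sum c Rj / B"
proof -
  let ?D = "Opt \<inter> (Yi \<union> Yo \<union> Rj)"
  have finO: "finite Opt" using OptN fin finite_subset by auto
  have h1: "v (?D \<union> Yi) \<le> v Yi + (\<Sum>u\<in>?D - Yi. marg v u Yi)"
    by (rule sub_union_le[OF sm Yi]) (use finO OptN in auto)
  have e: "?D - Yi = (Opt \<inter> Yo) \<union> Rj" using dj Rji RjO by auto
  have "v (?D \<union> Yi) \<le> v Yi + (\<Sum>u\<in>(Opt \<inter> Yo) \<union> Rj. marg v u Yi)"
    using h1 unfolding e .
  moreover have "(\<Sum>u\<in>(Opt \<inter> Yo) \<union> Rj. marg v u Yi) = (\<Sum>u\<in>Opt \<inter> Yo. marg v u Yi) + (\<Sum>u\<in>Rj. marg v u Yi)"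
    by (rule sum.union_disjoint) (use finO RjO finite_subset Rjo in auto)
  moreover have "(\<Sum>u\<in>Rj. marg v u Yi) \<le> (\<Sum>u\<in>Rj. c u * r / B)"
    by (rule sum_mono) (use mb in auto)
  moreover have "(\<Sum>u\<in>Rj. c u * r / B) = sum c Rj * r / B"
    by (simp add: sum_distrib_right sum_divide_distrib)
  moreover have "sum c Rj * r / B \<le> R * sum c Rj / B"
  proof -
    have "sum c Rj \<ge> 0" using cnn by (simp add: sum_nonneg)
    then have "sum c Rj * r \<le> sum c Rj * R" using rR by (simp add: mult_left_mono)
    then show ?thesis using Bp by (simp add: divide_right_mono mult.commute)
  qed
  ultimately show ?thesis using tele by linarith
qed

theorem lemma5p1:
  fixes N :: "'a set" and ord :: "'a list"
    and v :: "'a set \<Rightarrow> real" and c :: "'a \<Rightarrow> real"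
    and B \<alpha> :: real and M :: nat
    and \<rho> :: "nat \<Rightarrow> real" and S :: "nat \<Rightarrow> nat \<Rightarrow> 'a set"
    and Rs :: "nat \<Rightarrow> 'a set" and ps :: "nat \<Rightarrow> 'a \<Rightarrow> real"
    and Opt :: "'a set"
  assumes "finite N"
    and "distinct ord" and "set ord = N"
    and "v {} = 0"
    and "\<forall>X \<subseteq> N. v X \<ge> 0"
    and "submodular_on N v"
    and "\<forall>u \<in> N. c u \<ge> 0"
    and "B > 0" and "\<alpha> > 1"
    and "bfm_vm_run N ord v c B \<alpha> M \<rho> S Rs ps"
    and "Opt \<subseteq> N" and "sum c Opt \<le> B"
    and "\<forall>X \<subseteq> N. sum c X \<le> B \<longrightarrow> v X \<le> v Opt"
  shows "v Opt \<le> 2 * \<rho> M + 2 * (\<Sum>i\<in>{1,2::nat}. \<Sum>t\<in>{1..M}. v (S i t))"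
proof -
  note fin = assms(1) and dist = assms(2) and setord = assms(3) and v0 = assms(4)
    and vnn = assms(5) and sm = assms(6) and cnn = assms(7) and Bpos = assms(8)
    and alpha = assms(9) and OptN = assms(11) and cOpt = assms(12)
  note run = assms(10)[unfolded bfm_vm_run_def]
  have R1: "Rs 1 = {u \<in> N. c u \<le> B}" using run by (elim conjE) assumption
  have P1: "ps 1 = (\<lambda>u. B)" using run by (elim conjE) assumption
  obtain u0 where u0: "u0 \<in> Rs 1" "\<forall>u \<in> Rs 1. v {u} \<le> v {u0}" "\<rho> 1 = v {u0}"
      "S 1 1 = {u0}" "S 2 1 = {}" using run by (elim conjE bexE) blast
  have M2: "2 \<le> M" using run by (elim conjE) assumption
  have rounds: "\<And>t. t \<in> {2..M} \<Longrightarrow> \<rho> t = \<alpha> * \<rho> (t - 1) \<and>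
        bfm_round v c B (\<rho> t)
          (filter (\<lambda>u. u \<in> Rs (t - 1) \<and> u \<notin> S 1 (t - 1) \<union> S 2 (t - 1)) ord)
          (Rs (t - 1), ps (t - 1), (\<lambda>i. {}))
          (Rs t, ps t, (\<lambda>i. S i t))" using run by (elim conjE) blast
  have final: "Rs M - (\<Union>i\<in>{1,2}. S i (M - 1) \<union> S i M) = {}" using run by (elim conjE) assumption
  define L where "L t = filter (\<lambda>u. u \<in> Rs (t - 1) \<and> u \<notin> S 1 (t - 1) \<union> S 2 (t - 1)) ord" for t
  have rnd: "bfm_round v c B (\<rho> t) (L t) (Rs (t - 1), ps (t - 1), (\<lambda>i. {})) (Rs t, ps t, (\<lambda>i. S i t))"
    if "t \<in> {2..M}" for t using rounds[OF that] unfolding L_def by blast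
  have Lsub: "set (L t) \<subseteq> Rs (t - 1)" for t unfolding L_def by auto
  have Ldist: "distinct (L t)" for t unfolding L_def using dist by simp
  have rS: "S i t \<subseteq> set (L t)" if "t \<in> {2..M}" for i t
    using round_S[OF rnd[OF that]] by simp
  have rR: "Rs t \<subseteq> Rs (t - 1) \<and> Rs (t - 1) - Rs t \<subseteq> set (L t)" if "t \<in> {2..M}" for t
    using round_R[OF rnd[OF that]] by simp
  have rD: "S 1 t \<inter> S 2 t = {}" if "t \<in> {2..M}" for t
    using round_disj[OF rnd[OF that] Ldist] by simp
  have inv: "Rs t \<subseteq> N \<and> (\<forall>u\<in>Rs t. c u \<le> ps t u)" if "1 \<le> t" "t \<le> M" for t
    using that
  proof (induction t)
    case 0 then show ?case by simp
  next
    case (Suc n)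
    show ?case
    proof (cases "n = 0")
      case True then show ?thesis using R1 P1 by auto
    next
      case False
      then have IH: "Rs n \<subseteq> N \<and> (\<forall>u\<in>Rs n. c u \<le> ps n u)" using Suc by auto
      have t: "Suc n \<in> {2..M}" using False Suc.prems by auto
      have "\<forall>u\<in>Rs (Suc n). c u \<le> ps (Suc n) u"
        using round_p[OF rnd[OF t]] IH by simp
      then show ?thesis using rR[OF t] IH by auto
    qed
  qed
  have SN: "S i t \<subseteq> N" if "i \<in> {1,2}" "t \<in> {1..M}" for i t
  proof (cases "t = 1")
    case True then show ?thesis using u0 inv[of 1] M2 that by auto
  next
    case False
    then have t: "t \<in> {2..M}" using that by auto
    have "1 \<le> t - 1" "t - 1 \<le> M" using t by auto
    then have "Rs (t - 1) \<subseteq> N" using inv[of "t - 1"] by blast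
    then show ?thesis using rS[OF t] Lsub[of t] by blast
  qed
  have rho_eq: "\<rho> t = \<alpha> ^ (t - 1) * \<rho> 1" if "1 \<le> t" "t \<le> M" for t
    using that
  proof (induction t)
    case 0 then show ?case by simp
  next
    case (Suc n)
    show ?case
    proof (cases "n = 0")
      case True then show ?thesis by simp
    next
      case False
      then have "Suc n \<in> {2..M}" using Suc.prems by auto
      then have "\<rho> (Suc n) = \<alpha> * \<rho> n" using rounds by auto
      then show ?thesis using Suc False by (cases n) auto
    qed
  qed
  have u0N: "u0 \<in> N" using u0 R1 by auto
  have rho1: "\<rho> 1 \<ge> 0" using u0 vnn u0N by auto
  have OptR1: "Opt \<subseteq> Rs 1"
  proof
    fix u assume u: "u \<in> Opt"
    have "c u \<le> sum c Opt"
      by (rule member_le_sum) (use u OptN cnn fin finite_subset in auto)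
    then show "u \<in> Rs 1" using u OptN cOpt R1 by auto
  qed
  have finOpt: "finite Opt" using OptN fin finite_subset by auto
  have Snn: "v (S i t) \<ge> 0" if "i \<in> {1,2}" "t \<in> {1..M}" for i t
    using SN[OF that] vnn by auto
  have rhs_nn: "0 \<le> (\<Sum>i\<in>{1,2::nat}. \<Sum>t\<in>{1..M}. v (S i t))"
    by (intro sum_nonneg) (use Snn in auto)
  have rhoM: "\<rho> M = \<alpha> ^ (M - 1) * \<rho> 1" using rho_eq[of M] M2 by simp
  show ?thesis
  proof (cases "\<rho> 1 = 0")
    case True
    have "v Opt = v (\<Union>u\<in>Opt. {u})" by simp
    also have "\<dots> \<le> (\<Sum>u\<in>Opt. v {u})"
      by (rule subadd_UN[OF sm fin vnn v0 finOpt]) (use OptN in auto)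
    also have "\<dots> \<le> 0"
    proof (rule sum_nonpos)
      fix u assume "u \<in> Opt"
      then show "v {u} \<le> 0" using OptR1 u0 True by auto
    qed
    finally show ?thesis using rhoM True rhs_nn by simp
  next
    case False
    then have rho1p: "\<rho> 1 > 0" using rho1 by auto
    have apos: "\<alpha> > 0" using alpha by auto
    have rhop: "\<rho> t > 0" if "t \<in> {1..M}" for t
      using rho_eq[of t] that rho1p apos by auto
    have rhole: "\<rho> t \<le> \<rho> M" if "t \<in> {1..M}" for t
    proof -
      have "\<alpha> ^ (t - 1) \<le> \<alpha> ^ (M - 1)"
        by (rule power_increasing) (use that alpha in auto)
      then show ?thesis using rho_eq[of t] rhoM that rho1 by (simp add: mult_right_mono)
    qed
    have rej: "\<forall>w\<in>Rs (t - 1) - Rs t. w \<notin> S 1 t \<union> S 2 t \<and>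
        (\<forall>i\<in>{1,2}. marg v w (S i t) < c w * \<rho> t / B)" if t: "t \<in> {2..M}" for t
    proof -
      have "1 \<le> t - 1" "t - 1 \<le> M" using t by auto
      then have i1: "Rs (t - 1) \<subseteq> N \<and> (\<forall>u\<in>Rs (t - 1). c u \<le> ps (t - 1) u)"
        using inv[of "t - 1"] by blast
      have "\<rho> t > 0" using rhop t by auto
      then show ?thesis
        using round_rej[OF rnd[OF t] Ldist, of N] Lsub[of t] i1 Bpos sm by simp
    qed
    have tele: "(\<Sum>u\<in>Opt \<inter> S 1 t. marg v u (S 2 t)) \<le> v (S 1 t) \<and>
                (\<Sum>u\<in>Opt \<inter> S 2 t. marg v u (S 1 t)) \<le> v (S 2 t)" if t: "t \<in> {2..M}" for t
    proof -
      have "1 \<le> t - 1" "t - 1 \<le> M" using t by auto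
      then have i1: "Rs (t - 1) \<subseteq> N" using inv[of "t - 1"] by blast
      have "\<rho> t > 0" using rhop t by auto
      then show ?thesis
        using round_tele[OF rnd[OF t] Ldist, of N Opt] Lsub[of t] i1 Bpos sm cnn v0 by simp
    qed
    define Rej where "Rej t = Rs (t - 1) - Rs t" for t
    define D where "D t = Opt \<inter> (S 1 t \<union> S 2 t \<union> (if t = 1 then {} else Rej t))" for t
    define a where "a t = (if t = 1 then 0 else sum c (Opt \<inter> Rej t))" for t
    have cover: "Opt = (\<Union>t\<in>{1..M}. D t)"
    proof
      show "(\<Union>t\<in>{1..M}. D t) \<subseteq> Opt" unfolding D_def by auto
    next
      show "Opt \<subseteq> (\<Union>t\<in>{1..M}. D t)"
      proof
        fix u assume uO: "u \<in> Opt"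
        then have u1: "u \<in> Rs 1" using OptR1 by auto
        show "u \<in> (\<Union>t\<in>{1..M}. D t)"
        proof (cases "u \<in> Rs M")
          case True
          then obtain i where i: "i \<in> {1,2}" "u \<in> S i (M - 1) \<union> S i M" using final by blast
          show ?thesis
          proof (cases "u \<in> S i M")
            case True
            then have "u \<in> D M" using uO i unfolding D_def by auto
            then show ?thesis using M2 by auto
          next
            case False
            then have "u \<in> D (M - 1)" using uO i unfolding D_def by auto
            then show ?thesis using M2 by (intro UN_I[of "M - 1"]) auto
          qed
        next
          case False
          obtain t where t: "t \<in> {2..M}" "u \<in> Rs (t - 1) \<and> u \<notin> Rs t"
            using exists_drop[of M u Rs] M2 u1 False by auto
          then have "u \<in> D t" using uO unfolding D_def Rej_def by auto
          then show ?thesis using t by (intro UN_I[of t]) auto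
        qed
      qed
    qed
    have DN: "D t \<subseteq> N" for t unfolding D_def using OptN by auto
    have "v Opt \<le> (\<Sum>t\<in>{1..M}. v (D t))"
      using subadd_UN[OF sm fin vnn v0, of "{1..M}" D] DN cover by simp
    also have "\<dots> \<le> (\<Sum>t\<in>{1..M}. 2 * (v (S 1 t) + v (S 2 t)) + 2 * \<rho> M * a t / B)"
    proof (rule sum_mono)
      fix t assume t: "t \<in> {1..M}"
      show "v (D t) \<le> 2 * (v (S 1 t) + v (S 2 t)) + 2 * \<rho> M * a t / B"
      proof (cases "t = 1")
        case True
        have "v (D 1) \<le> v (S 1 1)"
        proof (cases "u0 \<in> Opt")
          case True then show ?thesis unfolding D_def using u0 by simp
        next
          case False
          then have "D 1 = {}" unfolding D_def using u0 by auto
          then show ?thesis using v0 Snn[of 1 1] M2 by simp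
        qed
        moreover have "v (S 2 1) = 0" using u0 v0 by simp
        moreover have "v (S 1 1) \<ge> 0" using Snn[of 1 1] M2 by simp
        ultimately show ?thesis using True unfolding a_def by simp
      next
        case False
        then have t2: "t \<in> {2..M}" using t by auto
        let ?Rj = "Opt \<inter> Rej t"
        have Y1: "S 1 t \<subseteq> N" and Y2: "S 2 t \<subseteq> N" using SN t by auto
        have dj: "S 1 t \<inter> S 2 t = {}" using rD[OF t2] .
        have rj: "\<forall>w\<in>Rej t. w \<notin> S 1 t \<union> S 2 t \<and>
          (\<forall>i\<in>{1,2}. marg v w (S i t) < c w * \<rho> t / B)" using rej[OF t2] unfolding Rej_def .
        have Dt: "D t = Opt \<inter> (S 1 t \<union> S 2 t \<union> ?Rj)" "D t = Opt \<inter> (S 2 t \<union> S 1 t \<union> ?Rj)"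
          unfolding D_def using False by auto
        have cR: "\<forall>u\<in>?Rj. c u \<ge> 0" using cnn OptN by auto
        have p1: "v (D t \<union> S 1 t) \<le> v (S 1 t) + v (S 2 t) + \<rho> M * sum c ?Rj / B"
          unfolding Dt(1)
          by (rule round_piece[OF sm fin Y1 Y2 dj OptN _ _ _ _ _ Bpos rhole[OF t] cR])
             (use rj tele[OF t2] in \<open>auto intro: less_imp_le\<close>)
        have p2: "v (D t \<union> S 2 t) \<le> v (S 2 t) + v (S 1 t) + \<rho> M * sum c ?Rj / B"
          unfolding Dt(2)
          by (rule round_piece[OF sm fin Y2 Y1 _ OptN _ _ _ _ _ Bpos rhole[OF t] cR])
             (use rj tele[OF t2] dj in \<open>auto intro: less_imp_le\<close>)
        have "v (D t) \<le> v (D t \<union> S 1 t) + v (D t \<union> S 2 t)"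
          by (rule two_set[OF sm fin vnn DN Y1 Y2 dj])
        then show ?thesis using p1 p2 False unfolding a_def by simp
      qed
    qed
    also have "\<dots> = 2 * (\<Sum>t\<in>{1..M}. v (S 1 t) + v (S 2 t)) + 2 * \<rho> M / B * (\<Sum>t\<in>{1..M}. a t)"
      by (simp add: sum.distrib sum_distrib_left sum_divide_distrib)
    also have "\<dots> \<le> 2 * (\<Sum>t\<in>{1..M}. v (S 1 t) + v (S 2 t)) + 2 * \<rho> M"
    proof -
      define f where "f t = sum c (Opt \<inter> Rs t)" for t
      have "a t = (if t = 1 then 0 else f (t - 1) - f t)" if "t \<in> {1..M}" for t
      proof (cases "t = 1")
        case False
        then have t2: "t \<in> {2..M}" using that by auto
        have sub: "Opt \<inter> Rs t \<subseteq> Opt \<inter> Rs (t - 1)" using rR[OF t2] by auto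
        have "Opt \<inter> Rej t = (Opt \<inter> Rs (t - 1)) - (Opt \<inter> Rs t)" unfolding Rej_def by auto
        then have "sum c (Opt \<inter> Rej t) = f (t - 1) - f t"
          unfolding f_def using sum_diff[OF _ sub, of c] finOpt by auto
        then show ?thesis unfolding a_def using False by simp
      qed (simp add: a_def)
      then have "(\<Sum>t\<in>{1..M}. a t) = (\<Sum>t\<in>{1..M}. (if t = 1 then 0 else f (t - 1) - f t))"
        by (rule sum.cong[OF refl])
      also have "\<dots> = f 1 - f M" using telescope[of M f] M2 by simp
      also have "\<dots> \<le> B"
      proof -
        have "f M \<ge> 0" unfolding f_def using cnn OptN by (auto intro: sum_nonneg)
        moreover have "f 1 \<le> sum c Opt" unfolding f_def
          by (rule sum_mono2) (use finOpt cnn OptN in auto)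
        ultimately show ?thesis using cOpt by linarith
      qed
      finally have sa: "(\<Sum>t\<in>{1..M}. a t) \<le> B" .
      have "\<rho> M \<ge> 0" using rhop[of M] M2 by auto
      then have "2 * \<rho> M / B * (\<Sum>t\<in>{1..M}. a t) \<le> 2 * \<rho> M / B * B"
        using sa Bpos by (intro mult_left_mono) auto
      also have "\<dots> = 2 * \<rho> M" using Bpos by simp
      finally show ?thesis by linarith
    qed
    also have "\<dots> = 2 * \<rho> M + 2 * (\<Sum>i\<in>{1,2::nat}. \<Sum>t\<in>{1..M}. v (S i t))"
      by (simp add: sum.distrib)
    finally show ?thesis .
  qed
qed

end
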